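(* Let $\bm x \in \Delta_n \setminus \{\bm e_1,\dots,\bm e_n, \tfrac1n \bm e\}$. Then the function $F(p) = \dfrac{1 - \|\bm x\|_p}{D_p\,\|\bm x\|_p}$ is strictly decreasing in $p$ for $p \geqslant 2$.
   Context: For $\bm x \in \mathbb{R}^n_{\geqslant 0}$ and real $p\geqslant 1$, $\|\bm x\|_p = (\sum_{i=1}^n x_i^p)^{1/p}$, and $D_p = n^{1-1/p}-1$. $\Delta_n = \{\bm x \in \mathbb{R}^n_{\geqslant 0} : \sum_{i=1}^n x_i = 1\}$ is the probability simplex, $\bm e_i$ is the $i$-th standard unit vector and $\bm e$ the all-ones vector in $\mathbb{R}^n$. *)

theory Defs
  imports "HOL-Analysis.Analysis"
begin

text \<open>Vectors in R^n are modelled as functions nat => real, with coordinates indexed by {..<n}.\<close>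

definition prob_simplex :: "nat \<Rightarrow> (nat \<Rightarrow> real) set" where
  "prob_simplex n = {x. (\<forall>i<n. 0 \<le> x i) \<and> (\<Sum>i<n. x i) = 1}"

definition unit_vec :: "nat \<Rightarrow> nat \<Rightarrow> real" where
  "unit_vec i = (\<lambda>j. if j = i then 1 else 0)"

definition pnorm :: "nat \<Rightarrow> real \<Rightarrow> (nat \<Rightarrow> real) \<Rightarrow> real" where
  "pnorm n p x = (\<Sum>i<n. x i powr p) powr (1 / p)"

definition Dp :: "nat \<Rightarrow> real \<Rightarrow> real" where
  "Dp n p = real n powr (1 - 1 / p) - 1"

definition Ffun :: "nat \<Rightarrow> (nat \<Rightarrow> real) \<Rightarrow> real \<Rightarrow> real" where
  "Ffun n x p = (1 - pnorm n p x) / (Dp n p * pnorm n p x)"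

end

theory Submission
  imports Defs
begin

lemma bern_strict:
  fixes g s :: real
  assumes g: "g > 1" and s: "s \<ge> 0" "s \<noteq> 1"
  shows "s powr g > 1 + g * (s - 1)"
proof (cases "s = 0")
  case True thus ?thesis using g by simp
next
  case False
  hence spos: "s > 0" using s by simp
  define f where "f = (\<lambda>s::real. s powr g - g * s)"
  have D: "(f has_real_derivative (g * t powr (g - 1) - g)) (at t)" if "t > 0" for t
    unfolding f_def using that
    by (auto intro!: derivative_eq_intros simp: powr_diff)
  show ?thesis
  proof (cases "s < 1")
    case True
    obtain z where z: "s < z" "z < 1" "f 1 - f s = (1 - s) * (g * z powr (g - 1) - g)"
      using MVT2[of s 1 f "\<lambda>t. g * t powr (g - 1) - g"] True spos D by force
    have "z powr (g - 1) < 1" using z spos g by (simp add: powr01_less_one)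
    hence "f 1 - f s < 0" using z True g by (simp add: mult_pos_neg)
    thus ?thesis unfolding f_def by (simp add: algebra_simps)
  next
    case False
    hence s1: "s > 1" using s by simp
    obtain z where z: "1 < z" "z < s" "f s - f 1 = (s - 1) * (g * z powr (g - 1) - g)"
      using MVT2[of 1 s f "\<lambda>t. g * t powr (g - 1) - g"] s1 D by force
    have "z powr (g - 1) > 1" using z g by (simp add: gr_one_powr)
    hence "f s - f 1 > 0" using z s1 g by simp
    thus ?thesis unfolding f_def by (simp add: algebra_simps)
  qed
qed

lemma bern:
  fixes g s :: real
  assumes g: "g > 1" and s: "s \<ge> 0"
  shows "s powr g \<ge> 1 + g * (s - 1)"
  using bern_strict[OF g s] by (cases "s = 1") auto

lemma tangent:
  fixes g a t :: real
  assumes g: "g > 1" and a: "a > 0" and t: "t \<ge> 0"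
  shows "t powr g \<ge> a powr g + g * a powr (g - 1) * (t - a)"
    and "t \<noteq> a \<Longrightarrow> t powr g > a powr g + g * a powr (g - 1) * (t - a)"
proof -
  have e: "a powr g = a * a powr (g - 1)" using a by (simp add: powr_diff)
  have tt: "t powr g = a powr g * (t / a) powr g" using a t by (simp add: powr_divide)
  have r: "a powr g * (1 + g * (t / a - 1)) = a powr g + g * a powr (g - 1) * (t - a)"
    using a by (simp add: e field_simps)
  have "a powr g * (t / a) powr g \<ge> a powr g * (1 + g * (t / a - 1))"
    using bern[OF g, of "t/a"] a t by (intro mult_left_mono) auto
  thus "t powr g \<ge> a powr g + g * a powr (g - 1) * (t - a)" using tt r by simp
  assume "t \<noteq> a"
  hence "t / a \<noteq> 1" using a by simp
  hence "a powr g * (t / a) powr g > a powr g * (1 + g * (t / a - 1))"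
    using bern_strict[OF g, of "t/a"] a t by (intro mult_strict_left_mono) auto
  thus "t powr g > a powr g + g * a powr (g - 1) * (t - a)" using tt r by simp
qed

lemma concave_bern:
  fixes th r :: real
  assumes th: "0 < th" "th < 1" and r: "r > 0" "r \<noteq> 1"
  shows "r powr th < 1 + th * (r - 1)"
proof -
  define u where "u = r powr th"
  have upos: "u > 0" using r u_def by simp
  have ru: "u powr (1/th) = r" using r th unfolding u_def by (simp add: powr_powr)
  have "u \<noteq> 1" using ru r by auto
  hence "u powr (1/th) > 1 + (1/th) * (u - 1)"
    using bern_strict[of "1/th" u] th upos by simp
  hence "r > 1 + (u - 1) / th" using ru by simp
  hence "th * r > th + (u - 1)" using th by (simp add: field_simps)
  thus ?thesis unfolding u_def by (simp add: algebra_simps)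
qed

lemma concave_tangent:
  fixes th a t :: real
  assumes th: "0 < th" "th < 1" and a: "a > 0" and t: "t > 0" "t \<noteq> a"
  shows "t powr th < a powr th + th * a powr (th - 1) * (t - a)"
proof -
  have e: "a powr th = a * a powr (th - 1)" using a by (simp add: powr_diff)
  have tt: "t powr th = a powr th * (t / a) powr th" using a t by (simp add: powr_divide)
  have r: "a powr th * (1 + th * (t / a - 1)) = a powr th + th * a powr (th - 1) * (t - a)"
    using a by (simp add: e field_simps)
  have "t / a \<noteq> 1" using a t by simp
  hence "a powr th * (t / a) powr th < a powr th * (1 + th * (t / a - 1))"
    using concave_bern[OF th, of "t/a"] a t by (intro mult_strict_left_mono) auto
  thus ?thesis using tt r by simp
qed

lemma chord:
  fixes th c1 c2 :: real
  assumes th: "0 < th" "th < 1" and c: "1 < c1" "c1 < c2"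
  shows "(c2 powr th - 1) / (c2 - 1) < (c1 powr th - 1) / (c1 - 1)"
proof -
  define k where "k = th * c1 powr (th - 1)"
  have h1: "1 < c1 powr th + k * (1 - c1)"
    using concave_tangent[OF th, of c1 1] c unfolding k_def by (simp add: mult.assoc)
  have h2: "c2 powr th < c1 powr th + k * (c2 - c1)"
    using concave_tangent[OF th, of c1 c2] c unfolding k_def by (simp add: mult.assoc)
  have "(c2 powr th - 1) * (c1 - 1) < (c1 powr th - 1 + k * (c2 - c1)) * (c1 - 1)"
    using h2 c by (intro mult_strict_right_mono) auto
  also have "\<dots> = (c1 powr th - 1) * (c1 - 1) + (k * (c1 - 1)) * (c2 - c1)"
    by (simp add: algebra_simps)
  also have "\<dots> < (c1 powr th - 1) * (c1 - 1) + (c1 powr th - 1) * (c2 - c1)"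
    using h1 c by (intro add_strict_left_mono mult_strict_right_mono) (auto simp: algebra_simps)
  also have "\<dots> = (c1 powr th - 1) * (c2 - 1)" by (simp add: algebra_simps)
  finally show ?thesis using c by (simp add: divide_simps)
qed

lemma power_mean:
  fixes w z :: "nat \<Rightarrow> real"
  assumes w: "\<forall>i\<in>A. 0 \<le> w i" and sw: "(\<Sum>i\<in>A. w i) = 1"
    and z: "\<forall>i\<in>A. 0 \<le> z i" and ab: "0 < al" "al < be"
  shows "(\<Sum>i\<in>A. w i * z i powr al) powr (be / al) \<le> (\<Sum>i\<in>A. w i * z i powr be)"
proof -
  define m where "m = (\<Sum>i\<in>A. w i * z i powr al)"
  define g where "g = be / al"
  have g: "g > 1" using ab unfolding g_def by simp
  have m0: "m \<ge> 0" unfolding m_def using w z by (intro sum_nonneg) auto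
  show ?thesis
  proof (cases "m = 0")
    case True
    thus ?thesis using w z unfolding m_def by (auto intro: sum_nonneg)
  next
    case False
    hence mpos: "m > 0" using m0 by simp
    have fin: "finite A" using sw by (metis sum.infinite zero_neq_one)
    have zz: "(z i powr al) powr g = z i powr be" for i using ab unfolding g_def by (simp add: powr_powr)
    have "(\<Sum>i\<in>A. w i * (m powr g + g * m powr (g - 1) * (z i powr al - m)))
        \<le> (\<Sum>i\<in>A. w i * z i powr be)"
      using w z tangent(1)[OF g mpos] zz by (intro sum_mono mult_left_mono) (auto simp: zz[symmetric])
    moreover have "(\<Sum>i\<in>A. w i * (m powr g + g * m powr (g - 1) * (z i powr al - m)))
        = m powr g * (\<Sum>i\<in>A. w i) + g * m powr (g - 1) * ((\<Sum>i\<in>A. w i * z i powr al) - m * (\<Sum>i\<in>A. w i))"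
      by (simp add: algebra_simps sum.distrib sum_distrib_left sum_subtractf flip: sum_distrib_right)
    ultimately show ?thesis using sw unfolding m_def g_def by simp
  qed
qed

theorem proposition4:
  fixes n :: nat and x :: "nat \<Rightarrow> real"
  assumes "x \<in> prob_simplex n"
    and "\<forall>i<n. \<exists>j<n. x j \<noteq> unit_vec i j"
    and "\<exists>j<n. x j \<noteq> 1 / real n"
  shows "\<forall>p q. 2 \<le> p \<longrightarrow> p < q \<longrightarrow> Ffun n x q < Ffun n x p"
proof (intro allI impI)
  fix p q :: real
  assume p2: "2 \<le> p" and pq: "p < q"
  have nn: "\<forall>i<n. 0 \<le> x i" and s1: "(\<Sum>i<n. x i) = 1"
    using assms(1) unfolding prob_simplex_def by auto
  have xle1: "x i \<le> 1" if "i < n" for i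
  proof -
    have "x i \<le> (\<Sum>i<n. x i)" using that nn by (intro member_le_sum) auto
    thus ?thesis using s1 by simp
  qed
  have ex: "\<exists>i<n. 0 < x i \<and> x i < 1"
  proof (rule ccontr)
    assume H: "\<not> ?thesis"
    have "\<exists>i<n. x i \<noteq> 0"
    proof (rule ccontr)
      assume "\<not> ?thesis"
      hence "(\<Sum>i<n. x i) = 0" by simp
      thus False using s1 by simp
    qed
    then obtain i where i: "i < n" "x i \<noteq> 0" by blast
    hence xi: "x i = 1" using H nn xle1[OF i(1)] by force
    have "\<forall>j<n. x j = unit_vec i j"
    proof (intro allI impI)
      fix j assume j: "j < n"
      show "x j = unit_vec i j"
      proof (cases "j = i")
        case True thus ?thesis using xi unfolding unit_vec_def by simp
      next
        case False
        have "x i + x j = (\<Sum>k\<in>{i,j}. x k)" using False by simp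
        also have "\<dots> \<le> (\<Sum>k<n. x k)" using i j nn by (intro sum_mono2) auto
        finally have "x j \<le> 0" using xi s1 by simp
        thus ?thesis using nn j False unfolding unit_vec_def by force
      qed
    qed
    thus False using assms(2) i(1) by blast
  qed
  then obtain i0 where i0: "i0 < n" "0 < x i0" "x i0 < 1" by blast
  have n2: "n \<ge> 2"
  proof (rule ccontr)
    assume "\<not> n \<ge> 2"
    hence "n = 1" using i0 by auto
    thus False using s1 i0 by simp
  qed
  have Spos: "(\<Sum>i<n. x i powr r) > 0" if "r > 0" for r
  proof -
    have "x i0 powr r \<le> (\<Sum>i<n. x i powr r)" using i0 by (intro member_le_sum) auto
    moreover have "x i0 powr r > 0" using i0 by simp
    ultimately show ?thesis by linarith
  qed
  have Slt: "(\<Sum>i<n. x i powr r) < 1" if "r > 1" for r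
  proof -
    have "(\<Sum>i<n. x i powr r) < (\<Sum>i<n. x i)"
    proof (rule sum_strict_mono_ex1)
      show "finite {..<n}" by simp
      show "\<forall>i\<in>{..<n}. x i powr r \<le> x i"
      proof
        fix i assume "i \<in> {..<n}"
        hence "0 \<le> x i" "x i \<le> 1" using nn xle1 by auto
        thus "x i powr r \<le> x i" using powr_mono'[of 1 r "x i"] that by simp
      qed
      show "\<exists>i\<in>{..<n}. x i powr r < x i"
      proof -
        have "x i0 powr r < x i0 powr 1" using i0 that by (intro powr_less_mono') simp_all
        thus ?thesis using i0 by auto
      qed
    qed
    thus ?thesis using s1 by simp
  qed
  define L where "L = ln (real n)"
  have Lpos: "L > 0" using n2 unfolding L_def by simp
  have p1: "p > 1" using p2 by simp
  have q1: "q > 1" using p2 pq by simp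
  define Sp where "Sp = (\<Sum>i<n. x i powr p)"
  define Sq where "Sq = (\<Sum>i<n. x i powr q)"
  have Sp0: "Sp > 0" "Sp < 1" using Spos[of p] Slt[of p] p1 unfolding Sp_def by auto
  have Sq0: "Sq > 0" "Sq < 1" using Spos[of q] Slt[of q] q1 unfolding Sq_def by auto
  have xx: "x i * x i powr (r - 1) = x i powr r" if "i < n" "r > 1" for i r
  proof (cases "x i = 0")
    case True thus ?thesis using that by simp
  next
    case False thus ?thesis using nn that by (simp add: powr_diff)
  qed
  have pm: "Sp powr ((q - 1) / (p - 1)) \<le> Sq"
  proof -
    have "(\<Sum>i\<in>{..<n}. x i * x i powr (p - 1)) powr ((q - 1) / (p - 1))
        \<le> (\<Sum>i\<in>{..<n}. x i * x i powr (q - 1))"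
      using nn s1 p1 pq by (intro power_mean) auto
    moreover have "(\<Sum>i\<in>{..<n}. x i * x i powr (p - 1)) = Sp"
      unfolding Sp_def using xx p1 by (intro sum.cong) auto
    moreover have "(\<Sum>i\<in>{..<n}. x i * x i powr (q - 1)) = Sq"
      unfolding Sq_def using xx q1 by (intro sum.cong) auto
    ultimately show ?thesis by simp
  qed
  have Splow: "Sp > real n powr (1 - p)"
  proof -
    define a where "a = 1 / real n"
    have apos: "a > 0" using n2 a_def by simp
    have "(\<Sum>i<n. a powr p + p * a powr (p - 1) * (x i - a)) < (\<Sum>i<n. x i powr p)"
    proof (rule sum_strict_mono_ex1)
      show "finite {..<n}" by simp
      show "\<forall>i\<in>{..<n}. a powr p + p * a powr (p - 1) * (x i - a) \<le> x i powr p"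
        using tangent(1)[OF p1 apos] nn by auto
      obtain j where j: "j < n" "x j \<noteq> a" using assms(3) a_def by auto
      thus "\<exists>i\<in>{..<n}. a powr p + p * a powr (p - 1) * (x i - a) < x i powr p"
        using tangent(2)[OF p1 apos] nn by auto
    qed
    moreover have "(\<Sum>i<n. a powr p + p * a powr (p - 1) * (x i - a))
        = real n * a powr p + p * a powr (p - 1) * ((\<Sum>i<n. x i) - real n * a)"
      by (simp add: sum.distrib sum_subtractf algebra_simps flip: sum_distrib_left sum_distrib_right)
    moreover have "real n * a = 1" using n2 a_def by simp
    moreover have "real n * a powr p = real n powr (1 - p)"
      using n2 unfolding a_def by (simp add: powr_divide powr_diff)
    ultimately show ?thesis using s1 unfolding Sp_def by simp
  qed
  define lp where "lp = ln Sp"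
  define lq where "lq = ln Sq"
  have lpneg: "lp < 0" using Sp0 lp_def by simp
  have lqp: "lq \<ge> ((q - 1) / (p - 1)) * lp"
  proof -
    have "ln (Sp powr ((q - 1) / (p - 1))) \<le> ln Sq"
      using pm Sp0 Sq0 by (subst ln_le_cancel_iff) auto
    thus ?thesis using Sp0 unfolding lq_def lp_def by (simp add: ln_powr)
  qed
  have lplow: "lp > (1 - p) * L"
  proof -
    have "ln (real n powr (1 - p)) < ln Sp"
      using Splow Sp0 n2 by (subst ln_less_cancel_iff) auto
    thus ?thesis using n2 unfolding lp_def L_def by (simp add: ln_powr)
  qed
  define th where "th = - lp / ((p - 1) * L)"
  have th0: "0 < th" unfolding th_def using lpneg p1 Lpos by (simp add: divide_simps)
  have th1: "th < 1" unfolding th_def using lplow p1 Lpos by (simp add: divide_simps algebra_simps)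
  define cp where "cp = real n powr (1 - 1 / p)"
  define cq where "cq = real n powr (1 - 1 / q)"
  have cpexp: "cp = exp ((1 - 1 / p) * L)" using n2 unfolding cp_def L_def by (simp add: powr_def)
  have cqexp: "cq = exp ((1 - 1 / q) * L)" using n2 unfolding cq_def L_def by (simp add: powr_def)
  have cp1: "1 < cp" using n2 p1 unfolding cp_def by (simp add: gr_one_powr)
  have cpq: "cp < cq" unfolding cp_def cq_def using n2 p1 pq
    by (auto intro!: powr_less_mono simp: frac_less2)
  have Fr: "Ffun n x r = (exp (- ln (\<Sum>i<n. x i powr r) / r) - 1) / (real n powr (1 - 1 / r) - 1)"
    if "r > 1" for r
  proof -
    have S: "(\<Sum>i<n. x i powr r) > 0" using Spos that by simp
    define N where "N = pnorm n r x"
    have N: "N = exp (ln (\<Sum>i<n. x i powr r) / r)" using S unfolding N_def pnorm_def by (simp add: powr_def)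
    have Npos: "N > 0" using N by simp
    have "Ffun n x r = (1 / N - 1) / (real n powr (1 - 1 / r) - 1)"
      unfolding Ffun_def Dp_def N_def[symmetric] using Npos by (simp add: field_simps)
    also have "1 / N = exp (- ln (\<Sum>i<n. x i powr r) / r)" using N by (simp add: exp_minus field_simps)
    finally show ?thesis .
  qed
  have Fp: "Ffun n x p = (cp powr th - 1) / (cp - 1)"
  proof -
    have "cp powr th = exp (th * ((1 - 1 / p) * L))" using cpexp by (simp add: powr_def)
    also have "th * ((1 - 1 / p) * L) = - lp / p" unfolding th_def using p1 Lpos by (simp add: field_simps)
    finally show ?thesis using Fr[OF p1] unfolding lp_def Sp_def cp_def by simp
  qed
  have "Ffun n x q = (exp (- lq / q) - 1) / (cq - 1)"
    using Fr[OF q1] unfolding lq_def Sq_def cq_def by simp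
  also have "\<dots> \<le> (cq powr th - 1) / (cq - 1)"
  proof -
    have "cq powr th = exp (th * ((1 - 1 / q) * L))" using cqexp by (simp add: powr_def)
    also have "th * ((1 - 1 / q) * L) = - ((q - 1) / (p - 1)) * lp / q"
      unfolding th_def using p1 q1 Lpos by (simp add: field_simps)
    finally have e: "cq powr th = exp (- ((q - 1) / (p - 1)) * lp / q)" .
    have "- lq / q \<le> - ((q - 1) / (p - 1)) * lp / q" using lqp q1 p1 by (simp add: divide_simps)
    hence "exp (- lq / q) \<le> cq powr th" using e by simp
    thus ?thesis using cp1 cpq by (intro divide_right_mono) auto
  qed
  also have "\<dots> < (cp powr th - 1) / (cp - 1)" using chord[OF th0 th1 cp1 cpq] .
  finally show "Ffun n x q < Ffun n x p" using Fp by simp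
qed

end
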